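(* Consider the multivariate linear model ${\bf y}_i={B^*}^T{\bf x}_i+\boldsymbol\epsilon_i$, $i=1,\dots,n$, with fixed design $X=({\bf x}_1,\dots,{\bf x}_n)^T\in\mathbb{R}^{n\times p}$, $n>p$, $X^TX$ invertible, unknown $B^*=(\boldsymbol\beta^*_1,\dots,\boldsymbol\beta^*_r)\in\mathbb{R}^{p\times r}$, and errors $\boldsymbol\epsilon_i=(\epsilon_{i1},\dots,\epsilon_{ir})^T$ i.i.d. over $i$ with mean zero, $E(\epsilon_{ic}^2)=1$ for all $i,c$, and $E(\epsilon_{ic}\epsilon_{ik})=\rho$ for $c\neq k$, where $\rho\in(0,1)$. Fix a partition $D=(D_1,\dots,D_Q)$ of $\{1,\dots,r\}$. Let $\dot B=(\dot{\boldsymbol\beta}_1,\dots,\dot{\boldsymbol\beta}_r)$ with $\dot{\boldsymbol\beta}_c=(X^TX)^{-1}X^T{\bf y}_c$ be the OLS estimates, and for $\gamma\ge0$ let $\bar B=\bar B(\gamma)$ be the minimizer over $B\in\mathbb{R}^{p\times r}$ of $$\frac{1}{2n}\sum_{i=1}^n\sum_{c=1}^r (y_{ic}-{\bf x}_i^T\boldsymbol\beta_c)^2+\frac{\gamma}{2n}\sum_{q=1}^Q\frac{1}{|D_q|}\sum_{l,m\in D_q}\|X(\boldsymbol\beta_l-\boldsymbol\beta_m)\|_2^2$$ (lasso parameter $\delta=0$). Then, for fixed $n$ and $p$, there exists $\gamma>0$ such that $$E\left(\|\bar B-B^*\|_2^2\right)\le E\left(\|\dot B-B^*\|_2^2\r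ight).$$
   Context: ${\bf y}_c\in\mathbb{R}^n$ is the $c$th column of $Y=({\bf y}_1,\dots,{\bf y}_n)^T\in\mathbb{R}^{n\times r}$ (response vectors ${\bf y}_i\in\mathbb{R}^r$ as rows), $y_{ic}$ its $(i,c)$ entry. For a matrix, $\|\cdot\|_2$ denotes the entrywise $L_2$ norm. The inner sum $\sum_{l,m\in D_q}$ runs over all ordered pairs $(l,m)$ in $D_q$. Expectations are over the errors. It is not assumed that responses in the same cluster have equal coefficients. *)

theory Defs
  imports "HOL-Probability.Probability"
begin

text \<open>Matrices are Cartesian-product types: X :: real^'p^'n (n x p),
  B :: real^'r^'p (p x r), Y :: real^'r^'n (n x r). The c-th column of B is
  \<open>column c B\<close> (coefficient vector beta_c).\<close>

definition is_partition :: "'a set set \<Rightarrow> bool" where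
  "is_partition D \<longleftrightarrow> (\<forall>d\<in>D. d \<noteq> {}) \<and>
     (\<forall>d\<in>D. \<forall>d'\<in>D. d \<noteq> d' \<longrightarrow> d \<inter> d' = {}) \<and> \<Union>D = UNIV"

definition frob2 :: "real^'m^'k \<Rightarrow> real" where
  "frob2 A = (\<Sum>i\<in>UNIV. \<Sum>j\<in>UNIV. (A $ i $ j)^2)"

definition objective ::
  "real \<Rightarrow> real^'p^'n \<Rightarrow> 'r set set \<Rightarrow> real^'r^'n \<Rightarrow> real^'r^'p \<Rightarrow> real" where
  "objective \<gamma> X D Y B =
     1 / (2 * real CARD('n)) * (\<Sum>i\<in>UNIV. \<Sum>c\<in>UNIV. (Y $ i $ c - (X $ i) \<bullet> column c B)^2)
   + \<gamma> / (2 * real CARD('n)) *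
       (\<Sum>d\<in>D. 1 / real (card d) *
          (\<Sum>l\<in>d. \<Sum>m\<in>d. (norm (X *v (column l B - column m B)))^2))"

text \<open>The minimizer \<open>\<bar>B(\<gamma>)\<close> (unique when X^T X is invertible and \<gamma> \<ge> 0).\<close>
definition barB ::
  "real \<Rightarrow> real^'p^'n \<Rightarrow> 'r set set \<Rightarrow> real^'r^'n \<Rightarrow> real^'r^'p" where
  "barB \<gamma> X D Y = (THE B. \<forall>B'. objective \<gamma> X D Y B \<le> objective \<gamma> X D Y B')"

definition dotB :: "real^'p^'n \<Rightarrow> real^'r^'n \<Rightarrow> real^'r^'p" where
  "dotB X Y = matrix_inv (transpose X ** X) ** transpose X ** Y"

end

theory Submission
  imports Defs
begin



definition clu :: "'r set set \<Rightarrow> 'r \<Rightarrow> 'r set" where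
  "clu D c = (THE d. d \<in> D \<and> c \<in> d)"

lemma clu_ex: assumes "is_partition D" shows "\<exists>!d. d \<in> D \<and> c \<in> d"
proof -
  have u: "\<Union>D = UNIV" and dj: "\<And>d d'. d \<in> D \<Longrightarrow> d' \<in> D \<Longrightarrow> d \<noteq> d' \<Longrightarrow> d \<inter> d' = {}"
    using assms unfolding is_partition_def by auto
  obtain d where "d \<in> D" "c \<in> d" using u by blast
  moreover have "\<And>d'. d' \<in> D \<Longrightarrow> c \<in> d' \<Longrightarrow> d' = d"
    using dj calculation by blast
  ultimately show ?thesis by blast
qed

lemma clu: assumes "is_partition D" shows "clu D c \<in> D" "c \<in> clu D c"
  using theI'[OF clu_ex[OF assms, of c]] unfolding clu_def by auto

lemma clu_eq: assumes "is_partition D" "d \<in> D" "c \<in> d" shows "clu D c = d"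
  using the1_equality[OF clu_ex[OF assms(1)]] assms unfolding clu_def by auto

lemma clu_mem_iff: assumes "is_partition D" shows "m \<in> clu D l \<longleftrightarrow> clu D m = clu D l"
  using clu[OF assms, of m] clu[OF assms, of l] clu_eq[OF assms, of "clu D l" m] by auto

lemma clu_card: assumes "is_partition D" shows "card (clu D (c::'r::finite)) \<ge> 1"
proof -
  have "0 < card (clu D c)" using clu(2)[OF assms, of c] by (auto simp: card_gt_0_iff)
  then show ?thesis by simp
qed

lemma sum_partition:
  assumes "is_partition D"
  shows "(\<Sum>d\<in>D. \<Sum>l\<in>d. F d l) = (\<Sum>l\<in>(UNIV::'r::finite set). F (clu D l) l)"
proof -
  have fD: "finite D" by (rule finite_subset[of _ "Pow UNIV"]) auto
  have "(\<Sum>d\<in>D. \<Sum>l\<in>d. F d l) = (\<Sum>d\<in>D. \<Sum>l\<in>d. F (clu D l) l)"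
    by (intro sum.cong refl) (simp add: clu_eq[OF assms])
  also have "\<dots> = (\<Sum>l\<in>\<Union>D. F (clu D l) l)"
    apply (subst sum.Union_disjoint)
      apply simp
     apply (use assms in \<open>simp add: is_partition_def\<close>)
    apply simp
    done
  also have "\<dots> = (\<Sum>l\<in>UNIV. F (clu D l) l)" using assms by (simp add: is_partition_def)
  finally show ?thesis .
qed

lemma pen_single:
  fixes a w :: "'r \<Rightarrow> real^'n"
  assumes "finite d" "d \<noteq> {}"
  shows "(1 / real (card d)) * (\<Sum>l\<in>d. \<Sum>m\<in>d. inner (a l - a m) (w l - w m))
     = 2 * (\<Sum>l\<in>d. inner (a l - (1 / real (card d)) *\<^sub>R (\<Sum>m\<in>d. a m)) (w l))"
proof -
  define c where "c = real (card d)"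
  have cd: "c \<noteq> 0" using assms by (simp add: c_def)
  define P where "P = (\<Sum>l\<in>d. inner (a l) (w l))"
  define R where "R = inner (\<Sum>m\<in>d. a m) (\<Sum>m\<in>d. w m)"
  have pt: "\<And>l m. inner (a l - a m) (w l - w m) = inner (a l) (w l) - inner (a l) (w m) - inner (a m) (w l) + inner (a m) (w m)"
    by (simp add: inner_diff_left inner_diff_right)
  have 1: "(\<Sum>l\<in>d. \<Sum>m\<in>d. inner (a l) (w l)) = c * P"
    by (simp add: c_def P_def sum_distrib_left)
  have 2: "(\<Sum>l\<in>d. \<Sum>m\<in>d. inner (a l) (w m)) = R"
    by (simp add: R_def inner_sum_left inner_sum_right) (rule sum.swap)
  have 3: "(\<Sum>l\<in>d. \<Sum>m\<in>d. inner (a m) (w l)) = R"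
    by (simp add: R_def inner_sum_left inner_sum_right)
  have 4: "(\<Sum>l\<in>d. \<Sum>m\<in>d. inner (a m) (w m)) = c * P"
    by (simp add: c_def P_def)
  have L: "(\<Sum>l\<in>d. \<Sum>m\<in>d. inner (a l - a m) (w l - w m)) = 2 * c * P - 2 * R"
    unfolding pt sum.distrib sum_subtractf 1 2 3 4 by simp
  have Rr: "(\<Sum>l\<in>d. inner (a l - (1 / c) *\<^sub>R (\<Sum>m\<in>d. a m)) (w l)) = P - R / c"
    by (simp add: inner_diff_left sum_subtractf P_def R_def inner_sum_right sum_divide_distrib)
  show ?thesis unfolding c_def[symmetric] L Rr using cd by (simp add: field_simps)
qed




definition avg :: "'r set set \<Rightarrow> ('r \<Rightarrow> real^'n) \<Rightarrow> 'r \<Rightarrow> real^'n" where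
  "avg D f c = (1 / real (card (clu D c))) *\<^sub>R (\<Sum>m\<in>clu D c. f m)"

definition Smat :: "real \<Rightarrow> 'r set set \<Rightarrow> real^'r^'r" where
  "Smat s D = (\<chi> k c. (if k = c then s else 0) + (1 - s) * (if k \<in> clu D c then 1 / real (card (clu D c)) else 0))"

lemma pen_total:
  fixes a w :: "'r::finite \<Rightarrow> real^'n"
  assumes "is_partition D"
  shows "(\<Sum>d\<in>D. 1 / real (card d) * (\<Sum>l\<in>d. \<Sum>m\<in>d. inner (a l - a m) (w l - w m)))
     = 2 * (\<Sum>l\<in>UNIV. inner (a l - avg D a l) (w l))"
proof -
  have "(\<Sum>d\<in>D. 1 / real (card d) * (\<Sum>l\<in>d. \<Sum>m\<in>d. inner (a l - a m) (w l - w m)))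
    = (\<Sum>d\<in>D. 2 * (\<Sum>l\<in>d. inner (a l - (1 / real (card d)) *\<^sub>R (\<Sum>m\<in>d. a m)) (w l)))"
  proof (rule sum.cong[OF refl])
    fix d assume "d \<in> D"
    then have "d \<noteq> {}" using assms by (auto simp: is_partition_def)
    then show "1 / real (card d) * (\<Sum>l\<in>d. \<Sum>m\<in>d. inner (a l - a m) (w l - w m))
       = 2 * (\<Sum>l\<in>d. inner (a l - (1 / real (card d)) *\<^sub>R (\<Sum>m\<in>d. a m)) (w l))"
      by (intro pen_single) auto
  qed
  also have "\<dots> = 2 * (\<Sum>d\<in>D. \<Sum>l\<in>d. inner (a l - (1 / real (card d)) *\<^sub>R (\<Sum>m\<in>d. a m)) (w l))"
    by (simp add: sum_distrib_left)
  also have "(\<Sum>d\<in>D. \<Sum>l\<in>d. inner (a l - (1 / real (card d)) *\<^sub>R (\<Sum>m\<in>d. a m)) (w l))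
     = (\<Sum>l\<in>UNIV. inner (a l - avg D a l) (w l))"
    unfolding avg_def by (rule sum_partition[OF assms])
  finally show ?thesis .
qed

lemma norm_vec_sq: "(norm (v::real^'n))^2 = (\<Sum>i\<in>UNIV. (v $ i)^2)"
  unfolding power2_norm_eq_inner inner_vec_def by (simp add: power2_eq_square)

lemma obj_vec:
  fixes X :: "real^'p^'n" and Y :: "real^'r^'n" and B :: "real^'r^'p"
  shows "objective \<gamma> X D Y B =
     1 / (2 * real CARD('n)) * (\<Sum>c\<in>UNIV. (norm (column c Y - X *v column c B))^2)
   + \<gamma> / (2 * real CARD('n)) *
       (\<Sum>d\<in>D. 1 / real (card d) *
          (\<Sum>l\<in>d. \<Sum>m\<in>d. (norm (X *v column l B - X *v column m B))^2))"
  unfolding objective_def norm_vec_sq matrix_vector_mult_diff_distrib[symmetric]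
  by (simp add: sum.swap[of _ "UNIV::'n set"] column_def matrix_vector_mult_def inner_vec_def)

lemma sq_add: "(norm (a + b :: real^'n))^2 = (norm a)^2 + 2 * inner a b + (norm b)^2"
  by (simp add: power2_norm_eq_inner inner_add_left inner_add_right inner_commute)

lemma matrix_inv_props:
  fixes G :: "real^'n^'n"
  assumes "invertible G"
  shows "G ** matrix_inv G = mat 1" "matrix_inv G ** G = mat 1"
  using someI_ex[OF assms[unfolded invertible_def]] unfolding matrix_inv_def by auto

lemma column_mult: "column c (A ** B) = (A::real^'n^'m) *v column c B"
  by (simp add: column_def matrix_matrix_mult_def matrix_vector_mult_def vec_eq_iff)

lemma column_mult_sum: "column c (P ** S) = (\<Sum>k\<in>UNIV. (S $ k $ c) *\<^sub>R column k (P::real^'k^'m))"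
  by (simp add: column_def matrix_matrix_mult_def vec_eq_iff mult.commute)

lemma mvsum: "(A::real^'n^'m) *v (\<Sum>k\<in>K. f k) = (\<Sum>k\<in>K. A *v f k)"
  by (simp add: matrix_vector_mult_def vec_eq_iff sum_distrib_left sum.swap[of _ K])

lemma inner_transpose: "inner (X *v u) (w::real^'n) = inner (u::real^'m) (transpose X *v w)"
  by (metis dot_lmul_matrix inner_commute vector_transpose_matrix transpose_transpose)




definition pen :: "'r set set \<Rightarrow> ('r \<Rightarrow> real^'n) \<Rightarrow> real" where
  "pen D w = (\<Sum>d\<in>D. 1 / real (card d) * (\<Sum>l\<in>d. \<Sum>m\<in>d. (norm (w l - w m))^2))"

definition pb :: "'r set set \<Rightarrow> ('r \<Rightarrow> real^'n) \<Rightarrow> ('r \<Rightarrow> real^'n) \<Rightarrow> real" where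
  "pb D u w = (\<Sum>d\<in>D. 1 / real (card d) * (\<Sum>l\<in>d. \<Sum>m\<in>d. inner (u l - u m) (w l - w m)))"

lemma sum3: "(\<Sum>d\<in>D. k d * (\<Sum>l\<in>d. \<Sum>m\<in>d. (f d l m::real) + 2 * g d l m + h d l m))
  = (\<Sum>d\<in>D. k d * (\<Sum>l\<in>d. \<Sum>m\<in>d. f d l m)) + 2 * (\<Sum>d\<in>D. k d * (\<Sum>l\<in>d. \<Sum>m\<in>d. g d l m))
    + (\<Sum>d\<in>D. k d * (\<Sum>l\<in>d. \<Sum>m\<in>d. h d l m))"
  by (simp add: sum.distrib distrib_left sum_distrib_left mult.left_commute)

lemma pen_add: "pen D (\<lambda>c. u c + w c) = pen D u + 2 * pb D u w + pen D w"
proof -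
  have "\<And>l m. (norm ((u l + w l) - (u m + w m)))^2 = (norm (u l - u m))^2 + 2 * inner (u l - u m) (w l - w m) + (norm (w l - w m))^2"
    by (metis (no_types, lifting) add_diff_add sq_add)
  then show ?thesis unfolding pen_def pb_def by (simp only: sum3)
qed

lemma pen_nonneg: "pen D w \<ge> 0"
  unfolding pen_def by (intro sum_nonneg mult_nonneg_nonneg) (auto intro: sum_nonneg)

lemma fit_add: "(\<Sum>c\<in>K. (norm (y c - (u c + w c)))^2)
   = (\<Sum>c\<in>K. (norm (y c - u c))^2) - 2 * (\<Sum>c\<in>K. inner (y c - u c) (w c)) + (\<Sum>c\<in>K. (norm (w c :: real^'n))^2)"
proof -
  have "\<And>c. (norm (y c - (u c + w c)))^2 = (norm (y c - u c))^2 - 2 * inner (y c - u c) (w c) + (norm (w c))^2"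
    using sq_add[of "y c - u c" "- w c" for c] by (simp add: algebra_simps)
  then show ?thesis by (simp add: sum.distrib sum_subtractf sum_distrib_left)
qed




lemma obj_pen:
  fixes X :: "real^'p^'n" and Y :: "real^'r^'n" and B :: "real^'r^'p"
  shows "objective \<gamma> X D Y B =
     1 / (2 * real CARD('n)) * (\<Sum>c\<in>UNIV. (norm (column c Y - X *v column c B))^2)
   + \<gamma> / (2 * real CARD('n)) * pen D (\<lambda>c. X *v column c B)"
  unfolding obj_vec pen_def ..

lemma Smat_col:
  fixes v :: "'r::finite \<Rightarrow> real^'n"
  assumes part: "is_partition D"
  shows "(\<Sum>k\<in>UNIV. (Smat s D $ k $ c) *\<^sub>R v k) = s *\<^sub>R v c + (1 - s) *\<^sub>R avg D v c"
proof -
  define a where "a = (1 - s) * (1 / real (card (clu D c)))"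
  have pt: "(Smat s D $ k $ c) *\<^sub>R v k = (if k = c then s *\<^sub>R v k else 0) + (if k \<in> clu D c then a *\<^sub>R v k else 0)" for k
    by (simp add: Smat_def scaleR_add_left a_def)
  have "(\<Sum>k\<in>UNIV. (Smat s D $ k $ c) *\<^sub>R v k)
     = (\<Sum>k\<in>UNIV. (if k = c then s *\<^sub>R v k else 0)) + (\<Sum>k\<in>UNIV. (if k \<in> clu D c then a *\<^sub>R v k else 0))"
    unfolding pt by (rule sum.distrib)
  also have "(\<Sum>k\<in>UNIV. (if k \<in> clu D c then a *\<^sub>R v k else 0)) = (\<Sum>k\<in>clu D c. a *\<^sub>R v k)"
    by (simp add: sum.inter_filter[symmetric])
  also have "\<dots> = a *\<^sub>R (\<Sum>k\<in>clu D c. v k)" by (simp add: scaleR_sum_right)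
  finally show ?thesis by (simp add: avg_def a_def)
qed

lemma avg_avg:
  fixes v :: "'r::finite \<Rightarrow> real^'n"
  assumes part: "is_partition D"
  shows "avg D (avg D v) c = avg D v c"
proof -
  have "\<And>m. m \<in> clu D c \<Longrightarrow> avg D v m = avg D v c"
    unfolding avg_def using clu_mem_iff[OF part] by metis
  then have "(\<Sum>m\<in>clu D c. avg D v m) = (\<Sum>m\<in>clu D c. avg D v c)"
    by (intro sum.cong) auto
  also have "\<dots> = real (card (clu D c)) *\<^sub>R avg D v c" by (rule sum_constant_scaleR)
  finally have "(\<Sum>m\<in>clu D c. avg D v m) = real (card (clu D c)) *\<^sub>R avg D v c" .
  moreover have "real (card (clu D c)) \<noteq> 0" using clu(2)[OF part, of c] by (auto simp: card_eq_0_iff)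
  ultimately show ?thesis by (simp add: avg_def)
qed

lemma avg_lin:
  fixes v w :: "'r::finite \<Rightarrow> real^'n"
  shows "avg D (\<lambda>c. a *\<^sub>R v c + b *\<^sub>R w c) c = a *\<^sub>R avg D v c + b *\<^sub>R avg D w c"
  by (simp add: avg_def sum.distrib scaleR_sum_right[symmetric] scaleR_add_right)

lemma inj_X:
  fixes X :: "real^'p^'n"
  assumes inv: "invertible (transpose X ** X)" and "X *v d = 0"
  shows "d = 0"
proof -
  have "(transpose X ** X) *v d = 0"
    using assms(2) by (metis matrix_vector_mul_assoc matrix_vector_mult_0_right)
  then have "matrix_inv (transpose X ** X) *v ((transpose X ** X) *v d) = 0" by simp
  then show ?thesis
    by (simp add: matrix_vector_mul_assoc matrix_inv_props(2)[OF inv])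
qed

lemma barB_eq:
  fixes X :: "real^'p^'n" and Y :: "real^'r^'n"
  assumes inv: "invertible (transpose X ** X)" and part: "is_partition D" and gam: "\<gamma> \<ge> 0"
  shows "barB \<gamma> X D Y = dotB X Y ** Smat (1 / (1 + 2 * \<gamma>)) D"
proof -
  define s where "s = 1 / (1 + 2 * \<gamma>)"
  have s1: "s * (1 + 2 * \<gamma>) = 1" using gam by (simp add: s_def)
  define G where "G = transpose X ** X"
  define Bd where "Bd = dotB X Y"
  define B0 where "B0 = Bd ** Smat s D"
  define v where "v c = X *v column c Bd" for c
  define u where "u c = X *v column c B0" for c
  define y where "y c = column c Y" for c
  define n where "n = real CARD('n)"
  have npos: "n > 0" by (simp add: n_def)
  have ucol: "u c = s *\<^sub>R v c + (1 - s) *\<^sub>R avg D v c" for c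
  proof -
    have "u c = X *v (\<Sum>k\<in>UNIV. (Smat s D $ k $ c) *\<^sub>R column k Bd)"
      by (simp add: u_def B0_def column_mult_sum)
    also have "\<dots> = (\<Sum>k\<in>UNIV. (Smat s D $ k $ c) *\<^sub>R v k)"
      by (simp add: mvsum matrix_vector_mult_scaleR v_def)
    finally show ?thesis using Smat_col[OF part] by simp
  qed
  have avgu: "avg D u c = avg D v c" for c
  proof -
    have "u = (\<lambda>c. s *\<^sub>R v c + (1 - s) *\<^sub>R avg D v c)" using ucol by auto
    then show ?thesis by (simp add: avg_lin avg_avg[OF part] scaleR_add_left[symmetric])
  qed
  have grad: "(u c - y c) + (2 * \<gamma>) *\<^sub>R (u c - avg D u c) = v c - y c" for c
  proof -
    have "(u c - y c) + (2 * \<gamma>) *\<^sub>R (u c - avg D u c)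
       = (v c - y c) + (s + 2 * \<gamma> * s - 1) *\<^sub>R (v c - avg D v c)"
      unfolding avgu ucol by (simp add: algebra_simps)
    also have "s + 2 * \<gamma> * s - 1 = 0" using s1 by (simp add: algebra_simps)
    finally show ?thesis by simp
  qed
  have Gi: "G ** matrix_inv G = mat 1" using matrix_inv_props(1)[OF inv] by (simp add: G_def)
  have XTv: "transpose X *v v c = transpose X *v y c" for c
  proof -
    have "v c = X *v ((matrix_inv G ** transpose X) *v y c)"
      by (simp add: v_def Bd_def dotB_def G_def y_def column_mult)
    then have "transpose X *v v c = (G ** matrix_inv G ** transpose X) *v y c"
      by (simp add: matrix_vector_mul_assoc G_def matrix_mul_assoc)
    then show ?thesis using Gi by simp
  qed
  have orth: "(\<Sum>c\<in>UNIV. inner (v c - y c) (X *v d c)) = 0" for d :: "'r \<Rightarrow> real^'p"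
  proof -
    have "inner (v c - y c) (X *v d c) = 0" for c
      using XTv[of c] by (simp add: inner_commute[of "v c - y c"] inner_transpose matrix_vector_mult_diff_distrib)
    then show ?thesis by simp
  qed
  have expand: "objective \<gamma> X D Y (B0 + Dl) = objective \<gamma> X D Y B0 +
      1 / (2 * n) * ((\<Sum>c\<in>UNIV. (norm (X *v column c Dl))^2) + \<gamma> * pen D (\<lambda>c. X *v column c Dl))"
    for Dl :: "real^'r^'p"
  proof -
    define w where "w c = X *v column c Dl" for c
    have cs: "X *v column c (B0 + Dl) = u c + w c" for c
    proof -
      have "column c (B0 + Dl) = column c B0 + column c Dl" by (simp add: column_def vec_eq_iff)
      then show ?thesis by (simp add: u_def w_def matrix_vector_right_distrib)
    qed
    have pbv: "pb D u w = 2 * (\<Sum>c\<in>UNIV. inner (u c - avg D u c) (w c))"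
      unfolding pb_def by (rule pen_total[OF part])
    have lin: "- 2 * (\<Sum>c\<in>UNIV. inner (y c - u c) (w c)) + \<gamma> * (2 * pb D u w) = 0"
    proof -
      have "- 2 * (\<Sum>c\<in>UNIV. inner (y c - u c) (w c)) + \<gamma> * (2 * pb D u w)
         = 2 * (\<Sum>c\<in>UNIV. inner ((u c - y c) + (2 * \<gamma>) *\<^sub>R (u c - avg D u c)) (w c))"
        unfolding pbv by (simp add: inner_add_left sum.distrib sum_distrib_left inner_diff_left algebra_simps sum_subtractf sum_negf)
      also have "\<dots> = 0" unfolding grad w_def by (simp add: orth)
      finally show ?thesis .
    qed
    have "objective \<gamma> X D Y (B0 + Dl) =
       1 / (2 * n) * (\<Sum>c\<in>UNIV. (norm (y c - (u c + w c)))^2)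
       + \<gamma> / (2 * n) * pen D (\<lambda>c. u c + w c)"
      unfolding obj_pen cs n_def y_def ..
    also have "\<dots> = 1 / (2 * n) * ((\<Sum>c\<in>UNIV. (norm (y c - u c))^2) - 2 * (\<Sum>c\<in>UNIV. inner (y c - u c) (w c)) + (\<Sum>c\<in>UNIV. (norm (w c))^2))
       + \<gamma> / (2 * n) * (pen D u + 2 * pb D u w + pen D w)"
      unfolding fit_add pen_add ..
    also have "\<dots> = (1 / (2 * n) * (\<Sum>c\<in>UNIV. (norm (y c - u c))^2) + \<gamma> / (2 * n) * pen D u)
       + 1 / (2 * n) * (- 2 * (\<Sum>c\<in>UNIV. inner (y c - u c) (w c)) + \<gamma> * (2 * pb D u w))
       + 1 / (2 * n) * ((\<Sum>c\<in>UNIV. (norm (w c))^2) + \<gamma> * pen D w)"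
      using npos by (simp add: field_simps)
    also have "1 / (2 * n) * (\<Sum>c\<in>UNIV. (norm (y c - u c))^2) + \<gamma> / (2 * n) * pen D u = objective \<gamma> X D Y B0"
      unfolding obj_pen n_def y_def u_def ..
    also have "1 / (2 * n) * (- 2 * (\<Sum>c\<in>UNIV. inner (y c - u c) (w c)) + \<gamma> * (2 * pb D u w)) = 0"
      using lin by simp
    finally show ?thesis by (simp add: w_def)
  qed
  have pos: "(\<Sum>c\<in>UNIV. (norm (X *v column c Dl))^2) + \<gamma> * pen D (\<lambda>c. X *v column c Dl) > 0"
    if "Dl \<noteq> 0" for Dl :: "real^'r^'p"
  proof -
    have "\<exists>i c. Dl $ i $ c \<noteq> 0" using that by (auto simp: vec_eq_iff)
    then obtain i c where "Dl $ i $ c \<noteq> 0" by blast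
    then have "column c Dl \<noteq> 0" by (auto simp: column_def vec_eq_iff)
    then have "X *v column c Dl \<noteq> 0" using inj_X[OF inv] by blast
    then have "(norm (X *v column c Dl))^2 > 0" by simp
    moreover have "(norm (X *v column c Dl))^2 \<le> (\<Sum>c\<in>UNIV. (norm (X *v column c Dl))^2)"
      by (rule member_le_sum) auto
    moreover have "\<gamma> * pen D (\<lambda>c. X *v column c Dl) \<ge> 0" by (intro mult_nonneg_nonneg gam pen_nonneg)
    ultimately show ?thesis by linarith
  qed
  have nonneg: "(\<Sum>c\<in>UNIV. (norm (X *v column c Dl))^2) + \<gamma> * pen D (\<lambda>c. X *v column c Dl) \<ge> 0"
    for Dl :: "real^'r^'p"
    using gam by (intro add_nonneg_nonneg sum_nonneg mult_nonneg_nonneg pen_nonneg) auto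
  have min: "objective \<gamma> X D Y B0 \<le> objective \<gamma> X D Y B'" for B'
    using expand[of "B' - B0"] nonneg[of "B' - B0"] npos by simp
  have uniq: "B1 = B0" if "\<forall>B'. objective \<gamma> X D Y B1 \<le> objective \<gamma> X D Y B'" for B1
  proof (rule ccontr)
    assume "B1 \<noteq> B0"
    then have "B1 - B0 \<noteq> 0" by simp
    from pos[OF this] expand[of "B1 - B0"] npos
    have "objective \<gamma> X D Y B1 > objective \<gamma> X D Y B0" by simp
    with that show False by (meson not_le)
  qed
  have "barB \<gamma> X D Y = B0"
    unfolding barB_def by (rule the_equality) (use min uniq in auto)
  then show ?thesis by (simp add: B0_def Bd_def s_def)
qed




lemma ab: "\<bar>f * g\<bar> \<le> (f::real)^2 + g^2"
proof -
  have "0 \<le> (\<bar>f\<bar> - \<bar>g\<bar>)^2" by simp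
  then have "2 * \<bar>f\<bar> * \<bar>g\<bar> \<le> f^2 + g^2" by (simp add: power2_eq_square algebra_simps)
  moreover have "0 \<le> \<bar>f\<bar> * \<bar>g\<bar>" by simp
  ultimately have "\<bar>f\<bar> * \<bar>g\<bar> \<le> f^2 + g^2" by linarith
  then show ?thesis by (simp add: abs_mult)
qed

lemma quad_expand:
  fixes a :: "'t \<Rightarrow> real"
  shows "((\<Sum>t\<in>I. a t * x t) + c)^2 = (\<Sum>t\<in>I. \<Sum>t'\<in>I. (a t * a t') * (x t * x t')) + 2 * c * (\<Sum>t\<in>I. a t * x t) + c^2"
proof -
  have "(\<Sum>t\<in>I. a t * x t) * (\<Sum>t\<in>I. a t * x t) = (\<Sum>t\<in>I. \<Sum>t'\<in>I. (a t * a t') * (x t * x t'))"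
    by (simp add: sum_product mult_ac)
  then show ?thesis by (simp add: power2_eq_square algebra_simps)
qed

context prob_space
begin

lemma quad_integral:
  fixes a :: "'t \<Rightarrow> real" and X :: "'t \<Rightarrow> 'a \<Rightarrow> real"
  assumes fin: "finite I"
    and i1: "\<And>t. integrable M (X t)"
    and i2: "\<And>t t'. integrable M (\<lambda>\<omega>. X t \<omega> * X t' \<omega>)"
  shows "integrable M (\<lambda>\<omega>. ((\<Sum>t\<in>I. a t * X t \<omega>) + c)^2)"
    and "(LINT \<omega>|M. ((\<Sum>t\<in>I. a t * X t \<omega>) + c)^2) =
       (\<Sum>t\<in>I. \<Sum>t'\<in>I. (a t * a t') * (LINT \<omega>|M. X t \<omega> * X t' \<omega>)) + 2 * c * (\<Sum>t\<in>I. a t * (LINT \<omega>|M. X t \<omega>)) + c^2"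
proof -
  have e: "(\<lambda>\<omega>. ((\<Sum>t\<in>I. a t * X t \<omega>) + c)^2) = (\<lambda>\<omega>. (\<Sum>t\<in>I. \<Sum>t'\<in>I. (a t * a t') * (X t \<omega> * X t' \<omega>)) + 2 * c * (\<Sum>t\<in>I. a t * X t \<omega>) + c^2)"
    by (simp add: quad_expand)
  have int1: "integrable M (\<lambda>\<omega>. \<Sum>t\<in>I. \<Sum>t'\<in>I. (a t * a t') * (X t \<omega> * X t' \<omega>))"
    using i2 by auto
  have int2: "integrable M (\<lambda>\<omega>. 2 * c * (\<Sum>t\<in>I. a t * X t \<omega>))"
    using i1 by auto
  show "integrable M (\<lambda>\<omega>. ((\<Sum>t\<in>I. a t * X t \<omega>) + c)^2)"
    unfolding e by (rule Bochner_Integration.integrable_add[OF Bochner_Integration.integrable_add[OF int1 int2]]) simp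
  show "(LINT \<omega>|M. ((\<Sum>t\<in>I. a t * X t \<omega>) + c)^2) = (\<Sum>t\<in>I. \<Sum>t'\<in>I. (a t * a t') * (LINT \<omega>|M. X t \<omega> * X t' \<omega>)) + 2 * c * (\<Sum>t\<in>I. a t * (LINT \<omega>|M. X t \<omega>)) + c^2"
    unfolding e
    using int1 int2 i1 i2 by (simp add: integral_add integral_sum integrable_sum integral_mult_right_zero prob_space)
qed

lemma prod_int:
  fixes f g :: "'a \<Rightarrow> real"
  assumes "f \<in> borel_measurable M" "g \<in> borel_measurable M"
    "integrable M (\<lambda>\<omega>. (f \<omega>)^2)" "integrable M (\<lambda>\<omega>. (g \<omega>)^2)"
  shows "integrable M (\<lambda>\<omega>. f \<omega> * g \<omega>)"
proof (rule Bochner_Integration.integrable_bound[of _ "\<lambda>\<omega>. (f \<omega>)^2 + (g \<omega>)^2"])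
  show "integrable M (\<lambda>\<omega>. (f \<omega>)^2 + (g \<omega>)^2)" using assms by auto
  show "(\<lambda>\<omega>. f \<omega> * g \<omega>) \<in> borel_measurable M" using assms by auto
  show "AE x in M. norm (f x * g x) \<le> norm ((f x)^2 + (g x)^2)"
  proof (rule AE_I2)
    fix x
    have "\<bar>f x * g x\<bar> \<le> (f x)^2 + (g x)^2" by (rule ab)
    then show "norm (f x * g x) \<le> norm ((f x)^2 + (g x)^2)" by simp
  qed
qed

end




lemma sum_prod_UNIV: "(\<Sum>t\<in>(UNIV::('x::finite \<times> 'y::finite) set). f t) = (\<Sum>x\<in>UNIV. \<Sum>y\<in>UNIV. f (x, y))"
  by (subst UNIV_Times_UNIV[symmetric]) (simp add: sum.cartesian_product)

lemma sum_swap3: "(\<Sum>c\<in>C. \<Sum>k\<in>K. \<Sum>i\<in>I. (F c k i :: real)) = (\<Sum>i\<in>I. \<Sum>c\<in>C. \<Sum>k\<in>K. F c k i)"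
proof -
  have "(\<Sum>c\<in>C. \<Sum>k\<in>K. \<Sum>i\<in>I. F c k i) = (\<Sum>c\<in>C. \<Sum>i\<in>I. \<Sum>k\<in>K. F c k i)"
    by (intro sum.cong refl) (rule sum.swap)
  also have "\<dots> = (\<Sum>i\<in>I. \<Sum>c\<in>C. \<Sum>k\<in>K. F c k i)" by (rule sum.swap)
  finally show ?thesis .
qed

lemma comb:
  fixes A :: "real^'n^'p" and S :: "real^'r^'r" and \<sigma> :: "'r \<Rightarrow> 'r \<Rightarrow> real"
  shows "(\<Sum>j\<in>UNIV. \<Sum>c\<in>UNIV. \<Sum>t\<in>UNIV. \<Sum>t'\<in>UNIV.
      ((A $ j $ snd t * S $ fst t $ c) * (A $ j $ snd t' * S $ fst t' $ c)) *
        (if snd t = snd t' then \<sigma> (fst t) (fst t') else 0))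
    = (\<Sum>j\<in>UNIV. \<Sum>i\<in>UNIV. (A $ j $ i)^2) * (\<Sum>c\<in>UNIV. \<Sum>k\<in>UNIV. \<Sum>k'\<in>UNIV. S $ k $ c * S $ k' $ c * \<sigma> k k')"
proof -
  have inner: "(\<Sum>k'\<in>UNIV. \<Sum>i'\<in>UNIV. ((A $ j $ i * S $ k $ c) * (A $ j $ i' * S $ k' $ c)) *
        (if i = i' then \<sigma> k k' else 0))
      = (\<Sum>k'\<in>UNIV. (A $ j $ i)^2 * (S $ k $ c * S $ k' $ c * \<sigma> k k'))" for j c k i
  proof (rule sum.cong[OF refl])
    fix k'
    have "(\<Sum>i'\<in>UNIV. ((A $ j $ i * S $ k $ c) * (A $ j $ i' * S $ k' $ c)) * (if i = i' then \<sigma> k k' else 0))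
       = (\<Sum>i'\<in>UNIV. if i = i' then ((A $ j $ i * S $ k $ c) * (A $ j $ i' * S $ k' $ c)) * \<sigma> k k' else 0)"
      by (rule sum.cong[OF refl]) simp
    also have "\<dots> = ((A $ j $ i * S $ k $ c) * (A $ j $ i * S $ k' $ c)) * \<sigma> k k'"
      by (simp add: sum.delta')
    also have "\<dots> = (A $ j $ i)^2 * (S $ k $ c * S $ k' $ c * \<sigma> k k')"
      by (simp add: power2_eq_square mult_ac)
    finally show "(\<Sum>i'\<in>UNIV. ((A $ j $ i * S $ k $ c) * (A $ j $ i' * S $ k' $ c)) * (if i = i' then \<sigma> k k' else 0))
       = (A $ j $ i)^2 * (S $ k $ c * S $ k' $ c * \<sigma> k k')" .
  qed
  have "(\<Sum>j\<in>UNIV. \<Sum>c\<in>UNIV. \<Sum>t\<in>UNIV. \<Sum>t'\<in>UNIV.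
      ((A $ j $ snd t * S $ fst t $ c) * (A $ j $ snd t' * S $ fst t' $ c)) *
        (if snd t = snd t' then \<sigma> (fst t) (fst t') else 0))
    = (\<Sum>j\<in>UNIV. \<Sum>c\<in>UNIV. \<Sum>k\<in>UNIV. \<Sum>i\<in>UNIV. \<Sum>k'\<in>UNIV. (A $ j $ i)^2 * (S $ k $ c * S $ k' $ c * \<sigma> k k'))"
    by (simp only: sum_prod_UNIV fst_conv snd_conv inner)
  also have "\<dots> = (\<Sum>j\<in>UNIV. \<Sum>i\<in>UNIV. \<Sum>c\<in>UNIV. \<Sum>k\<in>UNIV. \<Sum>k'\<in>UNIV. (A $ j $ i)^2 * (S $ k $ c * S $ k' $ c * \<sigma> k k'))"
    by (intro sum.cong refl) (rule sum_swap3)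
  also have "\<dots> = (\<Sum>j\<in>UNIV. \<Sum>i\<in>UNIV. (A $ j $ i)^2) * (\<Sum>c\<in>UNIV. \<Sum>k\<in>UNIV. \<Sum>k'\<in>UNIV. S $ k $ c * S $ k' $ c * \<sigma> k k')"
    by (simp only: sum_distrib_right) (simp only: sum_distrib_left)
  finally show ?thesis .
qed




context prob_space
begin

lemma exp_frob:
  fixes eps :: "'a \<Rightarrow> real^'r^'n" and A :: "real^'n^'p" and S :: "real^'r^'r" and C :: "real^'r^'p"
  assumes meas: "\<And>i c. (\<lambda>\<omega>. eps \<omega> $ i $ c) \<in> borel_measurable M"
    and indep: "indep_vars (\<lambda>_. borel) (\<lambda>i \<omega>. eps \<omega> $ i) UNIV"
    and sq_int: "\<And>i c. integrable M (\<lambda>\<omega>. (eps \<omega> $ i $ c)^2)"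
    and mean0: "\<And>i c. (LINT \<omega>|M. eps \<omega> $ i $ c) = 0"
    and var1: "\<And>i c. (LINT \<omega>|M. (eps \<omega> $ i $ c)^2) = 1"
    and cov: "\<And>i c k. c \<noteq> k \<Longrightarrow> (LINT \<omega>|M. eps \<omega> $ i $ c * eps \<omega> $ i $ k) = \<rho>"
  shows "(LINT \<omega>|M. frob2 ((A ** eps \<omega>) ** S + C)) =
     (\<Sum>j\<in>UNIV. \<Sum>i\<in>UNIV. (A $ j $ i)^2) * (\<Sum>c\<in>UNIV. \<Sum>k\<in>UNIV. \<Sum>k'\<in>UNIV. S $ k $ c * S $ k' $ c * (if k = k' then 1 else \<rho>))
     + frob2 C"
proof -
  define Xf :: "'r \<times> 'n \<Rightarrow> 'a \<Rightarrow> real" where "Xf t \<omega> = eps \<omega> $ snd t $ fst t" for t \<omega>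
  define \<sigma> :: "'r \<Rightarrow> 'r \<Rightarrow> real" where "\<sigma> k k' = (if k = k' then 1 else \<rho>)" for k k'
  define e where "e t t' = (if snd t = snd t' then \<sigma> (fst t) (fst t') else 0)" for t t' :: "'r \<times> 'n"
  define a where "a j c t = A $ j $ snd t * S $ fst t $ c" for j c and t :: "'r \<times> 'n"
  have i1: "integrable M (Xf t)" for t
    unfolding Xf_def by (rule square_integrable_imp_integrable[OF meas sq_int])
  have i2: "integrable M (\<lambda>\<omega>. Xf t \<omega> * Xf t' \<omega>)" for t t'
    unfolding Xf_def by (rule prod_int[OF meas meas sq_int sq_int])
  have E1: "(LINT \<omega>|M. Xf t \<omega>) = 0" for t unfolding Xf_def by (rule mean0)
  have E2: "(LINT \<omega>|M. Xf t \<omega> * Xf t' \<omega>) = e t t'" for t t'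
  proof (cases "snd t = snd t'")
    case True
    then show ?thesis
      using var1[of "snd t" "fst t"] cov[of "fst t" "fst t'" "snd t"]
      by (auto simp: Xf_def e_def \<sigma>_def power2_eq_square)
  next
    case False
    define i where "i = snd t"
    define i' where "i' = snd t'"
    define k where "k = fst t"
    define k' where "k' = fst t'"
    have ii: "i \<noteq> i'" using False by (simp add: i_def i'_def)
    define Y where "Y u = (if u = i then (\<lambda>x::real^'r. x $ k) else (\<lambda>x. x $ k'))" for u
    have Ym: "Y u \<in> borel_measurable borel" for u
      unfolding Y_def by (auto intro!: borel_measurable_continuous_onI continuous_on_component continuous_on_id)
    have ind2: "indep_vars (\<lambda>_. borel) (\<lambda>u \<omega>. Y u (eps \<omega> $ u)) {i, i'}"
      by (rule indep_vars_compose2[OF indep_vars_subset[OF indep]]) (auto intro: Ym)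
    have intY: "integrable M (\<lambda>\<omega>. Y u (eps \<omega> $ u))" for u
      unfolding Y_def by (auto intro: square_integrable_imp_integrable[OF meas sq_int])
    have "(LINT \<omega>|M. (\<Prod>u\<in>{i, i'}. Y u (eps \<omega> $ u))) = (\<Prod>u\<in>{i, i'}. LINT \<omega>|M. Y u (eps \<omega> $ u))"
      by (rule indep_vars_lebesgue_integral[OF _ ind2]) (auto intro: intY)
    then have "(LINT \<omega>|M. eps \<omega> $ i $ k * eps \<omega> $ i' $ k') = (LINT \<omega>|M. eps \<omega> $ i $ k) * (LINT \<omega>|M. eps \<omega> $ i' $ k')"
      using ii by (simp add: Y_def)
    then show ?thesis using False mean0 by (simp add: Xf_def e_def i_def i'_def k_def k'_def)
  qed
  have entry: "((A ** eps \<omega>) ** S + C) $ j $ c = (\<Sum>t\<in>UNIV. a j c t * Xf t \<omega>) + C $ j $ c" for \<omega> j c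
  proof -
    have "((A ** eps \<omega>) ** S) $ j $ c = (\<Sum>k\<in>UNIV. (\<Sum>i\<in>UNIV. A $ j $ i * eps \<omega> $ i $ k) * S $ k $ c)"
      by (simp add: matrix_matrix_mult_def)
    also have "\<dots> = (\<Sum>k\<in>UNIV. \<Sum>i\<in>UNIV. a j c (k, i) * Xf (k, i) \<omega>)"
      unfolding sum_distrib_right a_def Xf_def by (simp add: mult_ac)
    also have "\<dots> = (\<Sum>t\<in>UNIV. a j c t * Xf t \<omega>)" by (rule sum_prod_UNIV[symmetric])
    finally show ?thesis by simp
  qed
  have fr: "frob2 ((A ** eps \<omega>) ** S + C) = (\<Sum>j\<in>UNIV. \<Sum>c\<in>UNIV. ((\<Sum>t\<in>UNIV. a j c t * Xf t \<omega>) + C $ j $ c)^2)" for \<omega>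
    unfolding frob2_def entry ..
  have qi: "integrable M (\<lambda>\<omega>. ((\<Sum>t\<in>UNIV. a j c t * Xf t \<omega>) + C $ j $ c)^2)" for j c
    by (rule quad_integral(1)[OF finite i1 i2])
  have qv: "(LINT \<omega>|M. ((\<Sum>t\<in>UNIV. a j c t * Xf t \<omega>) + C $ j $ c)^2)
     = (\<Sum>t\<in>UNIV. \<Sum>t'\<in>UNIV. (a j c t * a j c t') * e t t') + (C $ j $ c)^2" for j c
    by (simp add: quad_integral(2)[OF finite i1 i2] E1 E2)
  have "(LINT \<omega>|M. frob2 ((A ** eps \<omega>) ** S + C))
     = (\<Sum>j\<in>UNIV. \<Sum>c\<in>UNIV. (\<Sum>t\<in>UNIV. \<Sum>t'\<in>UNIV. (a j c t * a j c t') * e t t') + (C $ j $ c)^2)"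
    unfolding fr using qi by (simp add: integral_sum qv)
  also have "\<dots> = (\<Sum>j\<in>UNIV. \<Sum>c\<in>UNIV. \<Sum>t\<in>UNIV. \<Sum>t'\<in>UNIV. (a j c t * a j c t') * e t t') + frob2 C"
    by (simp add: sum.distrib frob2_def)
  also have "(\<Sum>j\<in>UNIV. \<Sum>c\<in>UNIV. \<Sum>t\<in>UNIV. \<Sum>t'\<in>UNIV. (a j c t * a j c t') * e t t')
    = (\<Sum>j\<in>UNIV. \<Sum>i\<in>UNIV. (A $ j $ i)^2) * (\<Sum>c\<in>UNIV. \<Sum>k\<in>UNIV. \<Sum>k'\<in>UNIV. S $ k $ c * S $ k' $ c * \<sigma> k k')"
    unfolding a_def e_def by (rule comb)
  finally show ?thesis by (simp add: \<sigma>_def)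
qed

end




lemma W_formula:
  fixes S :: "real^'r^'r"
  shows "(\<Sum>k\<in>UNIV. \<Sum>k'\<in>UNIV. S $ k $ c * S $ k' $ c * (if k = k' then 1 else \<rho>))
    = (1 - \<rho>) * (\<Sum>k\<in>UNIV. (S $ k $ c)^2) + \<rho> * (\<Sum>k\<in>UNIV. S $ k $ c)^2"
proof -
  have pt: "S $ k $ c * S $ k' $ c * (if k = k' then 1 else \<rho>) = \<rho> * (S $ k $ c * S $ k' $ c) + (if k' = k then (1 - \<rho>) * (S $ k $ c)^2 else 0)" for k k'
    by (auto simp: power2_eq_square algebra_simps)
  have "(\<Sum>k\<in>UNIV. \<Sum>k'\<in>UNIV. S $ k $ c * S $ k' $ c * (if k = k' then 1 else \<rho>))
     = (\<Sum>k\<in>UNIV. \<Sum>k'\<in>UNIV. \<rho> * (S $ k $ c * S $ k' $ c)) + (\<Sum>k\<in>UNIV. (1 - \<rho>) * (S $ k $ c)^2)"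
    unfolding pt by (simp add: sum.distrib)
  also have "(\<Sum>k\<in>UNIV. \<Sum>k'\<in>UNIV. \<rho> * (S $ k $ c * S $ k' $ c)) = \<rho> * (\<Sum>k\<in>UNIV. S $ k $ c)^2"
  proof -
    have "(\<Sum>k\<in>UNIV. S $ k $ c)^2 = (\<Sum>k\<in>UNIV. \<Sum>k'\<in>UNIV. S $ k $ c * S $ k' $ c)"
      by (simp add: power2_eq_square sum_product)
    then show ?thesis by (simp add: sum_distrib_left)
  qed
  finally show ?thesis by (simp add: sum_distrib_left)
qed

lemma Smat_sum1:
  assumes part: "is_partition D"
  shows "(\<Sum>k\<in>UNIV. Smat s D $ k $ (c::'r::finite)) = 1"
proof -
  have m0: "real (card (clu D c)) \<noteq> 0" using clu(2)[OF part, of c] by (auto simp: card_eq_0_iff)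
  have pt: "Smat s D $ k $ c = (if k = c then s else 0) + (if k \<in> clu D c then (1 - s) / real (card (clu D c)) else 0)" for k
    by (simp add: Smat_def)
  have "(\<Sum>k\<in>UNIV. Smat s D $ k $ c) = (\<Sum>k\<in>UNIV. (if k = c then s else 0)) + (\<Sum>k\<in>UNIV. (if k \<in> clu D c then (1 - s) / real (card (clu D c)) else 0))"
    unfolding pt by (rule sum.distrib)
  also have "(\<Sum>k\<in>UNIV. (if k \<in> clu D c then (1 - s) / real (card (clu D c)) else 0)) = (\<Sum>k\<in>clu D c. (1 - s) / real (card (clu D c)))"
    by (simp add: sum.inter_filter[symmetric])
  finally show ?thesis using m0 by simp
qed

lemma Smat_sum2:
  assumes part: "is_partition D"
  shows "(\<Sum>k\<in>UNIV. (Smat s D $ k $ (c::'r::finite))^2) = s^2 + (1 - s^2) / real (card (clu D c))"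
proof -
  define m where "m = real (card (clu D c))"
  have m0: "m \<noteq> 0" using clu(2)[OF part, of c] by (auto simp: card_eq_0_iff m_def)
  have cc: "c \<in> clu D c" by (rule clu(2)[OF part])
  define a where "a = (1 - s) / m"
  have Sk: "Smat s D $ k $ c = (if k = c then s else 0) + (if k \<in> clu D c then a else 0)" for k
    by (simp add: Smat_def a_def m_def)
  have pt: "(Smat s D $ k $ c)^2 = (if k = c then s^2 + 2 * s * a else 0) + (if k \<in> clu D c then a^2 else 0)" for k
    unfolding Sk using cc by (cases "k = c") (auto simp: power2_sum)
  have "(\<Sum>k\<in>UNIV. (Smat s D $ k $ c)^2) = (s^2 + 2 * s * a) + (\<Sum>k\<in>clu D c. a^2)"
    unfolding pt sum.distrib by (simp add: sum.inter_filter[symmetric])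
  also have "(\<Sum>k\<in>clu D c. a^2) = m * a^2" by (simp add: m_def)
  also have "(s^2 + 2 * s * a) + m * a^2 = s^2 + (1 - s^2) / m"
    using m0 by (simp add: a_def field_simps power2_eq_square)
  finally show ?thesis unfolding m_def[symmetric] by simp
qed

lemma Smat_B:
  fixes B :: "real^'r^'p"
  assumes part: "is_partition D"
  shows "(B ** Smat s D) $ j $ c = s * B $ j $ c + (1 - s) * ((1 / real (card (clu D c))) * (\<Sum>k\<in>clu D c. B $ j $ k))"
proof -
  have "(B ** Smat s D) $ j $ c = (\<Sum>k\<in>UNIV. (if k = c then s * B $ j $ k else 0)) + (\<Sum>k\<in>UNIV. (if k \<in> clu D c then (1 - s) * (1 / real (card (clu D c))) * B $ j $ k else 0))"
  proof -
    have pt: "B $ j $ k * Smat s D $ k $ c = (if k = c then s * B $ j $ k else 0) + (if k \<in> clu D c then (1 - s) * (1 / real (card (clu D c))) * B $ j $ k else 0)" for k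
      by (simp add: Smat_def algebra_simps diff_divide_distrib add_divide_distrib)
    show ?thesis unfolding matrix_matrix_mult_def by (simp only: vec_lambda_beta pt sum.distrib)
  qed
  also have "(\<Sum>k\<in>UNIV. (if k \<in> clu D c then (1 - s) * (1 / real (card (clu D c))) * B $ j $ k else 0)) = (\<Sum>k\<in>clu D c. (1 - s) * (1 / real (card (clu D c))) * B $ j $ k)"
    by (simp add: sum.inter_filter[symmetric])
  finally show ?thesis by (simp add: sum_distrib_left mult.assoc)
qed




lemma matrix_add_rdistrib': "((P::real^'k^'m) + Q) ** S = P ** S + Q ** (S::real^'n^'k)"
  by (simp add: matrix_matrix_mult_def vec_eq_iff sum.distrib distrib_right)

lemma choose_gamma:
  fixes T K R \<rho> :: real
  assumes T: "T \<ge> 0" and K: "K \<ge> 0" and R: "R \<ge> 0" and rho: "\<rho> < 1"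
    and R0: "R = 0 \<Longrightarrow> K = 0" and Rp: "R > 0 \<Longrightarrow> T > 0"
  shows "\<exists>\<gamma>>0. (1 - 1 / (1 + 2 * \<gamma>))^2 * K \<le> T * (1 - \<rho>) * (1 - (1 / (1 + 2 * \<gamma>))^2) * R"
proof (cases "R = 0")
  case True
  then have "K = 0" by (rule R0)
  then show ?thesis using True by (intro exI[of _ 1]) simp
next
  case False
  then have Rpos: "R > 0" using R by simp
  then have Tpos: "T > 0" by (rule Rp)
  define P where "P = T * (1 - \<rho>) * R"
  have Ppos: "P > 0" unfolding P_def using Tpos Rpos rho by simp
  define \<tau> where "\<tau> = min (1/2) (P / (K + 1))"
  have tpos: "\<tau> > 0" unfolding \<tau>_def using Ppos K by simp
  have thalf: "\<tau> \<le> 1/2" unfolding \<tau>_def by (rule min.cobounded1)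
  have tle: "\<tau> \<le> P / (K + 1)" unfolding \<tau>_def by simp
  define \<gamma> where "\<gamma> = \<tau> / (2 * (1 - \<tau>))"
  have gpos: "\<gamma> > 0" unfolding \<gamma>_def using tpos thalf by simp
  have s: "1 / (1 + 2 * \<gamma>) = 1 - \<tau>"
    unfolding \<gamma>_def using thalf by (simp add: field_simps)
  have "\<tau> * (K + 1) \<le> P" using tle K by (simp add: field_simps)
  then have tK: "\<tau> * K \<le> P" using tpos by (simp add: algebra_simps)
  have "(1 - (1 - \<tau>))^2 * K = \<tau> * (\<tau> * K)" by (simp add: power2_eq_square)
  also have "\<dots> \<le> \<tau> * P" using tK tpos by (simp add: mult_left_mono)
  also have "\<dots> \<le> \<tau> * (2 - \<tau>) * P" using tpos thalf Ppos by (simp add: mult_right_mono algebra_simps)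
  also have "\<tau> * (2 - \<tau>) * P = T * (1 - \<rho>) * (1 - (1 - \<tau>)^2) * R"
    unfolding P_def by (simp add: power2_eq_square algebra_simps)
  finally show ?thesis using gpos s by (intro exI[of _ \<gamma>]) simp
qed




theorem theorem2:
  fixes M :: "'a measure"
    and X :: "real^'p^'n"
    and Bstar :: "real^'r^'p"
    and eps :: "'a \<Rightarrow> real^'r^'n"
    and \<rho> :: real
    and D :: "'r set set"
  assumes prob: "prob_space M"
    and np: "CARD('n) > CARD('p)"
    and inv: "invertible (transpose X ** X)"
    and rho: "0 < \<rho>" "\<rho> < 1"
    and part: "is_partition D"
    and meas: "\<And>i c. (\<lambda>\<omega>. eps \<omega> $ i $ c) \<in> borel_measurable M"
    and indep: "prob_space.indep_vars M (\<lambda>_. borel) (\<lambda>i \<omega>. eps \<omega> $ i) UNIV"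
    and ident: "\<And>i j. distr M borel (\<lambda>\<omega>. eps \<omega> $ i) = distr M borel (\<lambda>\<omega>. eps \<omega> $ j)"
    and sq_int: "\<And>i c. integrable M (\<lambda>\<omega>. (eps \<omega> $ i $ c)^2)"
    and mean0: "\<And>i c. (LINT \<omega>|M. eps \<omega> $ i $ c) = 0"
    and var1: "\<And>i c. (LINT \<omega>|M. (eps \<omega> $ i $ c)^2) = 1"
    and cov: "\<And>i c k. c \<noteq> k \<Longrightarrow> (LINT \<omega>|M. eps \<omega> $ i $ c * eps \<omega> $ i $ k) = \<rho>"
  shows "\<exists>\<gamma>>0.
     (LINT \<omega>|M. frob2 (barB \<gamma> X D (X ** Bstar + eps \<omega>) - Bstar))
       \<le> (LINT \<omega>|M. frob2 (dotB X (X ** Bstar + eps \<omega>) - Bstar))"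
proof -
  interpret prob_space M by (rule prob)
  define G where "G = transpose X ** X"
  define A where "A = matrix_inv G ** transpose X"
  have AX: "A ** X = mat 1"
    unfolding A_def using matrix_inv_props(2)[OF inv] by (simp add: G_def matrix_mul_assoc[symmetric])
  have dotE: "dotB X (X ** Bstar + eps \<omega>) = Bstar + A ** eps \<omega>" for \<omega>
    unfolding dotB_def A_def[unfolded G_def, symmetric]
    by (simp add: matrix_add_ldistrib matrix_mul_assoc AX)
  define W where "W S = (\<Sum>c\<in>UNIV. \<Sum>k\<in>UNIV. \<Sum>k'\<in>UNIV. S $ k $ c * S $ k' $ c * (if k = k' then 1 else \<rho>))" for S :: "real^'r^'r"
  define T where "T = (\<Sum>j\<in>UNIV. \<Sum>i\<in>UNIV. (A $ j $ i)^2)"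
  have EF: "(LINT \<omega>|M. frob2 ((A ** eps \<omega>) ** S + C)) = T * W S + frob2 C" for S C
    unfolding T_def W_def by (rule exp_frob[OF meas indep sq_int mean0 var1 cov])
  define m where "m c = real (card (clu D c))" for c
  have m1: "m c \<ge> 1" for c using clu_card[OF part, of c] by (simp add: m_def)
  have Wid: "W (mat 1) = real CARD('r)"
  proof -
    have h1: "(\<Sum>k\<in>UNIV. (mat 1 $ k $ c :: real)^2) = 1" for c
      by (simp add: mat_def if_distrib[of "\<lambda>x. x^2"] cong: if_cong)
    have h2: "(\<Sum>k\<in>UNIV. (mat 1 $ k $ c :: real)) = 1" for c
      by (simp add: mat_def)
    show ?thesis unfolding W_def W_formula by (simp only: h1 h2) simp
  qed
  have riskdot: "(LINT \<omega>|M. frob2 (dotB X (X ** Bstar + eps \<omega>) - Bstar)) = T * real CARD('r)"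
  proof -
    have "dotB X (X ** Bstar + eps \<omega>) - Bstar = (A ** eps \<omega>) ** mat 1 + 0" for \<omega>
      by (simp add: dotE)
    then have "(LINT \<omega>|M. frob2 (dotB X (X ** Bstar + eps \<omega>) - Bstar)) = T * W (mat 1) + frob2 (0::real^'r^'p)"
      using EF[of "mat 1" 0] by simp
    then show ?thesis by (simp add: Wid frob2_def)
  qed
  define avgB where "avgB j c = (1 / m c) * (\<Sum>k\<in>clu D c. Bstar $ j $ k)" for j c
  define K where "K = (\<Sum>j\<in>UNIV. \<Sum>c\<in>UNIV. (avgB j c - Bstar $ j $ c)^2)"
  define R where "R = (\<Sum>c\<in>UNIV. (1 - 1 / m c))"
  have riskbar: "(LINT \<omega>|M. frob2 (barB \<gamma> X D (X ** Bstar + eps \<omega>) - Bstar))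
      = T * real CARD('r) - T * (1 - \<rho>) * (1 - (1 / (1 + 2 * \<gamma>))^2) * R + (1 - 1 / (1 + 2 * \<gamma>))^2 * K"
    if gam: "\<gamma> > 0" for \<gamma>
  proof -
    define s where "s = 1 / (1 + 2 * \<gamma>)"
    define S where "S = Smat s D"
    define C where "C = Bstar ** S - Bstar"
    have "barB \<gamma> X D (X ** Bstar + eps \<omega>) - Bstar = (A ** eps \<omega>) ** S + C" for \<omega>
      using gam by (simp add: barB_eq[OF inv part] dotE S_def s_def C_def matrix_add_rdistrib')
    then have r1: "(LINT \<omega>|M. frob2 (barB \<gamma> X D (X ** Bstar + eps \<omega>) - Bstar)) = T * W S + frob2 C"
      using EF[of S C] by simp
    have WS: "W S = real CARD('r) - (1 - \<rho>) * (1 - s^2) * R"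
    proof -
      have "(1 - \<rho>) * (\<Sum>k\<in>UNIV. (S $ k $ c)^2) + \<rho> * (\<Sum>k\<in>UNIV. S $ k $ c)^2 = 1 - (1 - \<rho>) * (1 - s^2) * (1 - 1 / m c)" for c
      proof -
        have "m c \<noteq> 0" using m1[of c] by simp
        then show ?thesis
          unfolding S_def Smat_sum1[OF part] Smat_sum2[OF part] m_def[symmetric]
          by (simp add: field_simps)
      qed
      then have "W S = (\<Sum>c\<in>UNIV. 1 - (1 - \<rho>) * (1 - s^2) * (1 - 1 / m c))"
        unfolding W_def W_formula by simp
      also have "\<dots> = real CARD('r) - (1 - \<rho>) * (1 - s^2) * R"
      proof -
        have hR: "(\<Sum>c\<in>UNIV. (1 - \<rho>) * (1 - s^2) * (1 - 1 / m c)) = (1 - \<rho>) * (1 - s^2) * R"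
          by (simp only: R_def sum_distrib_left)
        show ?thesis by (simp only: sum_subtractf hR) simp
      qed
      finally show ?thesis .
    qed
    have FC: "frob2 C = (1 - s)^2 * K"
    proof -
      have "C $ j $ c = (1 - s) * (avgB j c - Bstar $ j $ c)" for j c
        unfolding C_def S_def using Smat_B[OF part, of Bstar s j c]
        by (simp add: avgB_def m_def algebra_simps)
      then show ?thesis
        by (simp add: frob2_def K_def power_mult_distrib sum_distrib_left)
    qed
    show ?thesis unfolding r1 WS FC s_def by (simp add: algebra_simps)
  qed
  have Tnn: "T \<ge> 0" unfolding T_def by (intro sum_nonneg) auto
  have Knn: "K \<ge> 0" unfolding K_def by (intro sum_nonneg) auto
  have Rterm: "1 - 1 / m c \<ge> 0" for c using m1[of c] by (simp add: field_simps)
  have Rnn: "R \<ge> 0" unfolding R_def using Rterm by (intro sum_nonneg) auto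
  have R0: "K = 0" if "R = 0"
  proof -
    have "\<forall>c\<in>UNIV. 1 - 1 / m c = 0"
      using that Rterm unfolding R_def by (subst sum_nonneg_eq_0_iff[symmetric]) auto
    then have mc1: "m c = 1" for c by (auto simp: field_simps)
    have single: "clu D c = {c}" for c
    proof -
      have "card (clu D c) = 1" using mc1[of c] by (simp add: m_def)
      then obtain x where "clu D c = {x}" by (auto simp: card_1_singleton_iff)
      with clu(2)[OF part, of c] show ?thesis by auto
    qed
    have "avgB j c = Bstar $ j $ c" for j c
      using single[of c] by (simp add: avgB_def m_def)
    then show ?thesis unfolding K_def by simp
  qed
  have Rp: "T > 0" if "R > 0"
  proof (rule ccontr)
    assume "\<not> T > 0"
    then have "T = 0" using Tnn by simp
    then have "\<forall>j\<in>UNIV. (\<Sum>i\<in>UNIV. (A $ j $ i)^2) = 0"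
      unfolding T_def by (subst sum_nonneg_eq_0_iff[symmetric]) (auto intro: sum_nonneg)
    then have "A $ j $ i = 0" for j i
      by (subst (asm) sum_nonneg_eq_0_iff) auto
    then have "A = 0" by (simp add: vec_eq_iff)
    then have "(mat 1 :: real^'p^'p) = 0" using AX by simp
    then have "(mat 1 :: real^'p^'p) $ undefined $ undefined = 0" by simp
    then show False by (simp add: mat_def)
  qed
  obtain \<gamma> where gpos: "\<gamma> > 0" and ineq: "(1 - 1 / (1 + 2 * \<gamma>))^2 * K \<le> T * (1 - \<rho>) * (1 - (1 / (1 + 2 * \<gamma>))^2) * R"
    using choose_gamma[OF Tnn Knn Rnn rho(2) R0 Rp] by blast
  show ?thesis
    using gpos ineq by (intro exI[of _ \<gamma>]) (simp add: riskbar riskdot)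
qed


end
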